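(* Let $X$ be a finite connected vertex transitive graph and $D=\operatorname{diam}(X)$. Suppose that for some $\epsilon,c>0$ there exists a 3-caret of branch length $R=\epsilon D^c$ in $X$. Then $|X|>\epsilon' D^{1+c(\log_3 4-1)}$, where $\epsilon'=\tfrac12\epsilon^{\log_3 4-1}$.
   Context: A 3-caret of branch length $R$ in a graph (with graph metric $d$) is a triple $\gamma_1,\gamma_2,\gamma_3$ of geodesics from a vertex $v_0$ to vertices $v_1,v_2,v_3$ respectively, with $d(v_0,v_i)=R$ for $i=1,2,3$, such that for all $k_1,k_2,k_3$ and $i\neq j$, $d(\gamma_i(k_i),\gamma_j(k_j))\ge\max\{k_i,k_j\}$ (here $\gamma_i(k)$ is the vertex at distance $k$ from $v_0$ along $\gamma_i$). *)

theory Defs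
  imports "HOL-Analysis.Analysis"
begin

definition fin_graph :: "'a set \<Rightarrow> ('a \<Rightarrow> 'a \<Rightarrow> bool) \<Rightarrow> bool" where
  "fin_graph V E \<longleftrightarrow> finite V \<and> V \<noteq> {} \<and>
     (\<forall>u v. E u v \<longrightarrow> u \<in> V \<and> v \<in> V) \<and>
     (\<forall>u v. E u v \<longrightarrow> E v u) \<and> (\<forall>u. \<not> E u u)"

definition walk :: "('a \<Rightarrow> 'a \<Rightarrow> bool) \<Rightarrow> (nat \<Rightarrow> 'a) \<Rightarrow> nat \<Rightarrow> bool" where
  "walk E p n \<longleftrightarrow> (\<forall>i<n. E (p i) (p (Suc i)))"

definition graph_connected :: "'a set \<Rightarrow> ('a \<Rightarrow> 'a \<Rightarrow> bool) \<Rightarrow> bool" where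
  "graph_connected V E \<longleftrightarrow>
     (\<forall>u\<in>V. \<forall>v\<in>V. \<exists>n p. p 0 = u \<and> p n = v \<and> walk E p n)"

definition gdist :: "('a \<Rightarrow> 'a \<Rightarrow> bool) \<Rightarrow> 'a \<Rightarrow> 'a \<Rightarrow> nat" where
  "gdist E u v = (LEAST n. \<exists>p. p 0 = u \<and> p n = v \<and> walk E p n)"

definition diam :: "'a set \<Rightarrow> ('a \<Rightarrow> 'a \<Rightarrow> bool) \<Rightarrow> nat" where
  "diam V E = Max {gdist E u v | u v. u \<in> V \<and> v \<in> V}"

definition graph_automorphism :: "'a set \<Rightarrow> ('a \<Rightarrow> 'a \<Rightarrow> bool) \<Rightarrow> ('a \<Rightarrow> 'a) \<Rightarrow> bool" where
  "graph_automorphism V E f \<longleftrightarrow> bij_betw f V V \<and>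
     (\<forall>u\<in>V. \<forall>v\<in>V. E u v \<longleftrightarrow> E (f u) (f v))"

definition vertex_transitive :: "'a set \<Rightarrow> ('a \<Rightarrow> 'a \<Rightarrow> bool) \<Rightarrow> bool" where
  "vertex_transitive V E \<longleftrightarrow>
     (\<forall>u\<in>V. \<forall>v\<in>V. \<exists>f. graph_automorphism V E f \<and> f u = v)"

definition geodesic :: "('a \<Rightarrow> 'a \<Rightarrow> bool) \<Rightarrow> (nat \<Rightarrow> 'a) \<Rightarrow> 'a \<Rightarrow> 'a \<Rightarrow> bool" where
  "geodesic E p u v \<longleftrightarrow> p 0 = u \<and> p (gdist E u v) = v \<and> walk E p (gdist E u v)"

definition caret3 :: "'a set \<Rightarrow> ('a \<Rightarrow> 'a \<Rightarrow> bool) \<Rightarrow> nat \<Rightarrow> bool" where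
  "caret3 V E R \<longleftrightarrow> (\<exists>v0 w g. v0 \<in> V \<and>
     (\<forall>i::nat<3. w i \<in> V \<and> gdist E v0 (w i) = R \<and> geodesic E (g i) v0 (w i)) \<and>
     (\<forall>i::nat<3. \<forall>j::nat<3. i \<noteq> j \<longrightarrow> (\<forall>ki\<le>R. \<forall>kj\<le>R.
         gdist E (g i ki) (g j kj) \<ge> max ki kj)))"

end

theory Submission
  imports Defs
begin

lemma walk_in_V:
  assumes "fin_graph V E" "walk E p n" "p 0 \<in> V" "i \<le> n"
  shows "p i \<in> V"
  using assms(4)
proof (induction i)
  case 0 then show ?case using assms(3) by simp
next
  case (Suc i)
  then have "E (p i) (p (Suc i))" using assms(2) unfolding walk_def by auto
  then show ?case using assms(1) unfolding fin_graph_def by blast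
qed

lemma gdist_le:
  assumes "walk E p n" "p 0 = u" "p n = v"
  shows "gdist E u v \<le> n"
  unfolding gdist_def using assms by (intro Least_le) blast

lemma gdist_walk:
  assumes "graph_connected V E" "u \<in> V" "v \<in> V"
  shows "\<exists>p. p 0 = u \<and> p (gdist E u v) = v \<and> walk E p (gdist E u v)"
proof -
  have "\<exists>n p. p 0 = u \<and> p n = v \<and> walk E p n"
    using assms unfolding graph_connected_def by blast
  then show ?thesis unfolding gdist_def by (rule LeastI_ex)
qed

lemma walk_append:
  assumes "walk E p n" "walk E q m" "p n = q 0"
  shows "walk E (\<lambda>i. if i \<le> n then p i else q (i - n)) (n + m)"
  unfolding walk_def
proof (intro allI impI)
  fix i assume i: "i < n + m"
  show "E (if i \<le> n then p i else q (i - n)) (if Suc i \<le> n then p (Suc i) else q (Suc i - n))"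
  proof (cases "i < n")
    case True then show ?thesis using assms(1) unfolding walk_def by auto
  next
    case False
    then have "i - n < m" "Suc i - n = Suc (i - n)" using i by auto
    then have "E (q (i - n)) (q (Suc i - n))" using assms(2) unfolding walk_def by auto
    moreover have "(if i \<le> n then p i else q (i - n)) = q (i - n)"
      using False assms(3) by (cases "i = n") auto
    ultimately show ?thesis using False by auto
  qed
qed

lemma gdist_triangle:
  assumes "graph_connected V E" "u \<in> V" "v \<in> V" "w \<in> V"
  shows "gdist E u w \<le> gdist E u v + gdist E v w"
proof -
  obtain p where p: "p 0 = u" "p (gdist E u v) = v" "walk E p (gdist E u v)"
    using gdist_walk[OF assms(1,2,3)] by blast
  obtain q where q: "q 0 = v" "q (gdist E v w) = w" "walk E q (gdist E v w)"
    using gdist_walk[OF assms(1,3,4)] by blast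
  have "walk E (\<lambda>i. if i \<le> gdist E u v then p i else q (i - gdist E u v)) (gdist E u v + gdist E v w)"
    using walk_append[OF p(3) q(3)] p q by simp
  then show ?thesis
  proof (rule gdist_le)
    show "(if gdist E u v + gdist E v w \<le> gdist E u v then p (gdist E u v + gdist E v w)
      else q (gdist E u v + gdist E v w - gdist E u v)) = w"
      using p q by (cases "gdist E v w = 0") auto
  qed (use p in auto)
qed

lemma walk_rev:
  assumes "fin_graph V E" "walk E p n"
  shows "walk E (\<lambda>i. p (n - i)) n"
  unfolding walk_def
proof (intro allI impI)
  fix i assume "i < n"
  then have "E (p (n - Suc i)) (p (Suc (n - Suc i)))" using assms(2) unfolding walk_def by auto
  moreover have "Suc (n - Suc i) = n - i" using \<open>i < n\<close> by auto
  ultimately show "E (p (n - i)) (p (n - Suc i))" using assms(1) unfolding fin_graph_def by metis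
qed

lemma gdist_sym_le:
  assumes "fin_graph V E" "graph_connected V E" "u \<in> V" "v \<in> V"
  shows "gdist E v u \<le> gdist E u v"
proof -
  obtain p where p: "p 0 = u" "p (gdist E u v) = v" "walk E p (gdist E u v)"
    using gdist_walk[OF assms(2,3,4)] by blast
  show ?thesis using walk_rev[OF assms(1) p(3)] by (rule gdist_le) (use p in auto)
qed

lemma gdist_sym:
  assumes "fin_graph V E" "graph_connected V E" "u \<in> V" "v \<in> V"
  shows "gdist E v u = gdist E u v"
  using gdist_sym_le[OF assms] gdist_sym_le[OF assms(1,2,4,3)] by simp

lemma walk_segment:
  assumes "walk E p n" "i \<le> j" "j \<le> n"
  shows "gdist E (p i) (p j) \<le> j - i"
proof -
  have "walk E (\<lambda>t. p (i + t)) (j - i)" using assms unfolding walk_def by auto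
  then show ?thesis by (rule gdist_le) (use assms in auto)
qed

lemma geodesic_segment:
  assumes "fin_graph V E" "graph_connected V E" "walk E p n" "p 0 \<in> V"
    "gdist E (p 0) (p n) = n" "i \<le> j" "j \<le> n"
  shows "gdist E (p i) (p j) = j - i"
proof -
  have V: "\<And>k. k \<le> n \<Longrightarrow> p k \<in> V" using walk_in_V assms(1,3,4) by blast
  have "n \<le> gdist E (p 0) (p i) + gdist E (p i) (p n)"
    using gdist_triangle[OF assms(2) V V V, of 0 i n] assms by simp
  also have "gdist E (p i) (p n) \<le> gdist E (p i) (p j) + gdist E (p j) (p n)"
    using gdist_triangle[OF assms(2) V V V, of i j n] assms by simp
  finally have "n \<le> gdist E (p 0) (p i) + gdist E (p i) (p j) + gdist E (p j) (p n)" by simp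
  moreover have "gdist E (p 0) (p i) \<le> i" using walk_segment[OF assms(3), of 0 i] assms by simp
  moreover have "gdist E (p j) (p n) \<le> n - j" using walk_segment[OF assms(3), of j n] assms by simp
  moreover have "gdist E (p i) (p j) \<le> j - i" using walk_segment[OF assms(3,6,7)] .
  ultimately show ?thesis using assms(6,7) by linarith
qed

lemma auto_walk:
  assumes "fin_graph V E" "graph_automorphism V E f" "walk E p n" "p 0 \<in> V"
  shows "walk E (f \<circ> p) n"
  unfolding walk_def
proof (intro allI impI)
  fix i assume i: "i < n"
  have "p i \<in> V" "p (Suc i) \<in> V" using walk_in_V[OF assms(1,3,4)] i by auto
  moreover have "E (p i) (p (Suc i))" using assms(3) i unfolding walk_def by auto
  ultimately show "E ((f \<circ> p) i) ((f \<circ> p) (Suc i))"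
    using assms(2) unfolding graph_automorphism_def by auto
qed

lemma auto_gdist:
  assumes "fin_graph V E" "graph_connected V E" "graph_automorphism V E f" "u \<in> V" "v \<in> V"
  shows "gdist E (f u) (f v) \<le> gdist E u v"
proof -
  obtain p where p: "p 0 = u" "p (gdist E u v) = v" "walk E p (gdist E u v)"
    using gdist_walk[OF assms(2,4,5)] by blast
  show ?thesis using auto_walk[OF assms(1,3) p(3)] p assms(4)
    by (intro gdist_le[of E "f \<circ> p"]) auto
qed

definition gball :: "'a set \<Rightarrow> ('a \<Rightarrow> 'a \<Rightarrow> bool) \<Rightarrow> 'a \<Rightarrow> nat \<Rightarrow> 'a set" where
  "gball V E x s = {y \<in> V. gdist E x y \<le> s}"

lemma gball_card_le:
  assumes "fin_graph V E" "graph_connected V E" "vertex_transitive V E" "x \<in> V" "y \<in> V"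
  shows "card (gball V E x s) \<le> card (gball V E y s)"
proof -
  obtain f where f: "graph_automorphism V E f" "f x = y"
    using assms(3-5) unfolding vertex_transitive_def by blast
  have inj: "inj_on f V" using f(1) unfolding graph_automorphism_def bij_betw_def by auto
  have img: "f ` gball V E x s \<subseteq> gball V E y s"
  proof
    fix z assume "z \<in> f ` gball V E x s"
    then obtain t where t: "t \<in> V" "gdist E x t \<le> s" "z = f t" unfolding gball_def by auto
    have "f t \<in> V" using f(1) t(1) unfolding graph_automorphism_def bij_betw_def by auto
    moreover have "gdist E (f x) (f t) \<le> s" using auto_gdist[OF assms(1,2) f(1) assms(4) t(1)] t by simp
    ultimately show "z \<in> gball V E y s" using t f unfolding gball_def by auto
  qed
  have fin: "finite (gball V E y s)" using assms(1) unfolding fin_graph_def gball_def by auto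
  show ?thesis
    by (rule card_inj_on_le[OF _ img fin]) (rule inj_on_subset[OF inj], auto simp: gball_def)
qed

lemma gball_card_eq:
  assumes "fin_graph V E" "graph_connected V E" "vertex_transitive V E" "x \<in> V" "y \<in> V"
  shows "card (gball V E x s) = card (gball V E y s)"
  using gball_card_le[OF assms, of s] gball_card_le[OF assms(1-3,5,4), of s] by simp

lemma balls_count:
  assumes G: "fin_graph V E" "graph_connected V E" "vertex_transitive V E"
    and I: "finite I" and cV: "\<And>i. i \<in> I \<Longrightarrow> c i \<in> V"
    and sep: "\<And>i j. i \<in> I \<Longrightarrow> j \<in> I \<Longrightarrow> i \<noteq> j \<Longrightarrow> 2 * s < gdist E (c i) (c j)"
    and sub: "\<And>i. i \<in> I \<Longrightarrow> gball V E (c i) s \<subseteq> S"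
    and S: "finite S" and x: "x \<in> V"
  shows "card I * card (gball V E x s) \<le> card S"
proof -
  have fin: "\<And>i. finite (gball V E (c i) s)" using G(1) unfolding fin_graph_def gball_def by auto
  have disj: "\<forall>i\<in>I. \<forall>j\<in>I. i \<noteq> j \<longrightarrow> gball V E (c i) s \<inter> gball V E (c j) s = {}"
  proof (intro ballI impI)
    fix i j assume ij: "i \<in> I" "j \<in> I" "i \<noteq> j"
    show "gball V E (c i) s \<inter> gball V E (c j) s = {}"
    proof (rule ccontr)
      assume "gball V E (c i) s \<inter> gball V E (c j) s \<noteq> {}"
      then obtain y where y: "y \<in> V" "gdist E (c i) y \<le> s" "gdist E (c j) y \<le> s"
        unfolding gball_def by auto
      have "gdist E (c i) (c j) \<le> gdist E (c i) y + gdist E y (c j)"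
        using gdist_triangle[OF G(2) cV y(1) cV] ij by auto
      also have "gdist E y (c j) = gdist E (c j) y" using gdist_sym[OF G(1,2) cV y(1)] ij by auto
      finally show False using sep[OF ij] y by linarith
    qed
  qed
  have "card (\<Union>i\<in>I. gball V E (c i) s) = (\<Sum>i\<in>I. card (gball V E (c i) s))"
    by (rule card_UN_disjoint[OF I]) (use fin disj in auto)
  also have "\<dots> = (\<Sum>i\<in>I. card (gball V E x s))"
  proof (rule sum.cong)
    fix i assume "i \<in> I"
    then show "card (gball V E (c i) s) = card (gball V E x s)"
      using gball_card_eq[OF G cV[OF \<open>i \<in> I\<close>] x] by blast
  qed simp
  also have "\<dots> = card I * card (gball V E x s)" by simp
  finally have "card I * card (gball V E x s) = card (\<Union>i\<in>I. gball V E (c i) s)" by simp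
  also have "\<dots> \<le> card S" using sub by (intro card_mono[OF S]) blast
  finally show ?thesis .
qed

lemma caret_step:
  assumes G: "fin_graph V E" "graph_connected V E" "vertex_transitive V E"
    and v0: "v0 \<in> V"
    and W: "\<forall>i::nat<3. w i \<in> V \<and> gdist E v0 (w i) = R \<and> geodesic E (g i) v0 (w i)"
    and C: "\<forall>i::nat<3. \<forall>j::nat<3. i \<noteq> j \<longrightarrow> (\<forall>ki\<le>R. \<forall>kj\<le>R.
         gdist E (g i ki) (g j kj) \<ge> max ki kj)"
    and k: "2 * s + 1 \<le> R"
  shows "4 * card (gball V E v0 s) \<le> card (gball V E v0 (3 * s + 1))"
proof -
  define k where "k = 2 * s + 1"
  have kR: "k \<le> R" using k k_def by simp
  have gw: "\<And>i. i < 3 \<Longrightarrow> walk E (g i) R \<and> g i 0 = v0"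
    using W unfolding geodesic_def by auto
  have gV: "\<And>i. i < 3 \<Longrightarrow> g i k \<in> V"
    using gw walk_in_V[OF G(1)] v0 kR by metis
  have gle: "\<And>i. i < 3 \<Longrightarrow> gdist E v0 (g i k) \<le> k"
    using gw walk_segment[of E _ R 0 k] kR by fastforce
  have gge: "\<And>i. i < 3 \<Longrightarrow> k \<le> gdist E v0 (g i k)"
  proof -
    fix i :: nat assume i: "i < 3"
    define i' where "i' = (if i = 0 then 1 else (0::nat))"
    have "i' < 3" "i' \<noteq> i" using i unfolding i'_def by auto
    then have "max 0 k \<le> gdist E (g i' 0) (g i k)" using C i kR by blast
    then show "k \<le> gdist E v0 (g i k)" using gw[OF \<open>i' < 3\<close>] by simp
  qed
  define c where "c i = (if i = 3 then v0 else g i k)" for i :: nat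
  have cV: "\<And>i. i \<in> {0..3} \<Longrightarrow> c i \<in> V" using gV v0 unfolding c_def by fastforce
  have sep: "2 * s < gdist E (c i) (c j)" if ij: "i \<in> {0..3}" "j \<in> {0..3}" "i \<noteq> j" for i j
  proof (cases "i = 3")
    case True
    then have "j < 3" using ij by auto
    then show ?thesis using True gge[of j] ij unfolding c_def k_def by auto
  next
    case False
    then have i3: "i < 3" using ij by auto
    show ?thesis
    proof (cases "j = 3")
      case True
      then have "gdist E (c i) (c j) = gdist E v0 (g i k)"
        using gdist_sym[OF G(1,2) v0 gV[OF i3]] False unfolding c_def by auto
      then show ?thesis using gge[OF i3] unfolding k_def by auto
    next
      case False
      then have "j < 3" using ij by auto
      then have "max k k \<le> gdist E (g i k) (g j k)" using C i3 ij(3) kR by blast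
      then show ?thesis using False \<open>i \<noteq> 3\<close> unfolding c_def k_def by auto
    qed
  qed
  have sub: "gball V E (c i) s \<subseteq> gball V E v0 (3 * s + 1)" if i: "i \<in> {0..3}" for i
  proof
    fix y assume "y \<in> gball V E (c i) s"
    then have y: "y \<in> V" "gdist E (c i) y \<le> s" unfolding gball_def by auto
    have "gdist E v0 y \<le> gdist E v0 (c i) + gdist E (c i) y"
      using gdist_triangle[OF G(2) v0 cV[OF i] y(1)] .
    moreover have "gdist E v0 (c i) \<le> k"
    proof (cases "i = 3")
      case True
      have "gdist E v0 v0 \<le> 0" by (rule gdist_le[of E "\<lambda>_. v0" 0]) (auto simp: walk_def)
      then show ?thesis using True unfolding c_def by simp
    next
      case False then show ?thesis using gle[of i] i unfolding c_def by auto
    qed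
    ultimately show "y \<in> gball V E v0 (3 * s + 1)" using y unfolding gball_def k_def by auto
  qed
  have "card {0..(3::nat)} * card (gball V E v0 s) \<le> card (gball V E v0 (3 * s + 1))"
    by (rule balls_count[OF G _ cV sep sub _ v0])
       (use G(1) in \<open>auto simp: fin_graph_def gball_def\<close>)
  then show ?thesis by simp
qed

fun rad :: "nat \<Rightarrow> nat" where
  "rad 0 = 0" | "rad (Suc j) = 3 * rad j + 1"

lemma rad_eq: "2 * rad j + 1 = 3 ^ j"
  by (induction j) auto

lemma caret_growth:
  assumes G: "fin_graph V E" "graph_connected V E" "vertex_transitive V E"
    and v0: "v0 \<in> V"
    and W: "\<forall>i::nat<3. w i \<in> V \<and> gdist E v0 (w i) = R \<and> geodesic E (g i) v0 (w i)"
    and C: "\<forall>i::nat<3. \<forall>j::nat<3. i \<noteq> j \<longrightarrow> (\<forall>ki\<le>R. \<forall>kj\<le>R.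
         gdist E (g i ki) (g j kj) \<ge> max ki kj)"
  shows "3 ^ j \<le> 3 * R \<Longrightarrow> 4 ^ j \<le> card (gball V E v0 (rad j))"
proof (induction j)
  case 0
  have "gdist E v0 v0 \<le> 0" by (rule gdist_le[of E "\<lambda>_. v0" 0]) (auto simp: walk_def)
  then have "v0 \<in> gball V E v0 0" using v0 unfolding gball_def by auto
  moreover have "finite (gball V E v0 0)" using G(1) unfolding fin_graph_def gball_def by auto
  ultimately show ?case by (simp add: card_gt_0_iff Suc_le_eq) blast
next
  case (Suc j)
  then have "3 ^ j \<le> R" by simp
  then have "2 * rad j + 1 \<le> R" using rad_eq[of j] by simp
  from caret_step[OF G v0 W C this]
  have "4 * card (gball V E v0 (rad j)) \<le> card (gball V E v0 (rad (Suc j)))" by simp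
  moreover have "4 ^ j \<le> card (gball V E v0 (rad j))" using Suc by simp
  ultimately show ?case by simp
qed

lemma diam_attained:
  assumes "fin_graph V E"
  shows "\<exists>u\<in>V. \<exists>v\<in>V. diam V E = gdist E u v"
proof -
  have eq: "{gdist E u v | u v. u \<in> V \<and> v \<in> V} = (\<lambda>(u,v). gdist E u v) ` (V \<times> V)" by auto
  have "finite (V \<times> V)" "V \<times> V \<noteq> {}" using assms unfolding fin_graph_def by auto
  then have "diam V E \<in> {gdist E u v | u v. u \<in> V \<and> v \<in> V}"
    unfolding diam_def eq by (intro Max_in) auto
  then show ?thesis by auto
qed

lemma diam_count:
  assumes G: "fin_graph V E" "graph_connected V E" "vertex_transitive V E"
    and v0: "v0 \<in> V"
    and W: "\<forall>i::nat<3. w i \<in> V \<and> gdist E v0 (w i) = R \<and> geodesic E (g i) v0 (w i)"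
    and C: "\<forall>i::nat<3. \<forall>j::nat<3. i \<noteq> j \<longrightarrow> (\<forall>ki\<le>R. \<forall>kj\<le>R.
         gdist E (g i ki) (g j kj) \<ge> max ki kj)"
    and m: "3 ^ m \<le> R"
  shows "(diam V E div 3 ^ m + 1) * 4 ^ m \<le> card V"
proof -
  define D where "D = diam V E"
  obtain u v where uv: "u \<in> V" "v \<in> V" "D = gdist E u v"
    using diam_attained[OF G(1)] unfolding D_def by blast
  obtain p where p: "p 0 = u" "p D = v" "walk E p D"
    using gdist_walk[OF G(2) uv(1,2)] uv(3) by auto
  define L :: nat where "L = 3 ^ m"
  define T where "T = D div L"
  have L0: "L > 0" unfolding L_def by simp
  have TL: "T * L \<le> D" unfolding T_def by (simp add: div_times_less_eq_dividend)
  define c where "c t = p (t * L)" for t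
  have pV: "\<And>k. k \<le> D \<Longrightarrow> p k \<in> V" using walk_in_V[OF G(1) p(3)] p(1) uv(1) by auto
  have cV: "\<And>t. t \<in> {0..T} \<Longrightarrow> c t \<in> V"
  proof -
    fix t assume "t \<in> {0..T}"
    then have "t * L \<le> T * L" by auto
    then have "t * L \<le> D" using TL by linarith
    then show "c t \<in> V" using pV unfolding c_def by auto
  qed
  have seg: "gdist E (c t) (c t') = t' * L - t * L" if "t \<le> t'" "t' \<le> T" for t t'
  proof -
    have a: "t * L \<le> t' * L" using mult_le_mono1[OF that(1), of L] .
    have b: "t' * L \<le> D" using mult_le_mono1[OF that(2), of L] TL by linarith
    have e: "gdist E (p 0) (p D) = D" using p uv by simp
    have p0: "p 0 \<in> V" using p uv by simp
    show ?thesis unfolding c_def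
      by (rule geodesic_segment[OF G(1,2) p(3) p0 e a b])
  qed
  have sep: "2 * rad m < gdist E (c t) (c t')"
    if tt: "t \<in> {0..T}" "t' \<in> {0..T}" "t \<noteq> t'" for t t'
  proof -
    have key: "L \<le> b * L - a * L" if "a < b" for a b :: nat
    proof -
      have "b * L - a * L = (b - a) * L" by (simp add: diff_mult_distrib)
      moreover have "b - a \<ge> 1" using that by simp
      ultimately show ?thesis by simp
    qed
    have "L \<le> gdist E (c t) (c t')"
    proof (cases "t < t'")
      case True then show ?thesis using seg[of t t'] key[OF True] tt by auto
    next
      case False
      then have "t' < t" using tt by auto
      moreover have "gdist E (c t) (c t') = gdist E (c t') (c t)"
        using gdist_sym[OF G(1,2) cV cV] tt by metis
      ultimately show ?thesis using seg[of t' t] key[of t' t] tt by auto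
    qed
    then show ?thesis using rad_eq[of m] unfolding L_def by simp
  qed
  have "card {0..T} * card (gball V E v0 (rad m)) \<le> card V"
    by (rule balls_count[OF G _ cV sep _ _ v0]) (use G(1) in \<open>auto simp: fin_graph_def gball_def\<close>)
  moreover have "4 ^ m \<le> card (gball V E v0 (rad m))"
    using caret_growth[OF G v0 W C] m by simp
  ultimately have "(T + 1) * 4 ^ m \<le> card V"
    by (metis card_atLeastAtMost diff_zero Suc_eq_plus1 le_trans mult_le_mono2)
  then show ?thesis unfolding T_def L_def D_def .
qed

theorem lemma4p2p1:
  fixes V :: "'a set" and E :: "'a \<Rightarrow> 'a \<Rightarrow> bool" and \<epsilon> c :: real
  assumes "fin_graph V E" and "graph_connected V E" and "vertex_transitive V E"
    and "\<epsilon> > 0" and "c > 0"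
    and "real R = \<epsilon> * real (diam V E) powr c"
    and "caret3 V E R"
  shows "real (card V) >
    (1/2) * \<epsilon> powr (log 3 4 - 1) * real (diam V E) powr (1 + c * (log 3 4 - 1))"
proof -
  note G = assms(1-3)
  define a :: real where "a = log 3 4 - 1"
  have "1 < log 3 (4::real)" by (subst less_log_iff) auto
  then have a0: "a > 0" unfolding a_def by simp
  have cardpos: "card V > 0" using G(1) unfolding fin_graph_def by (simp add: card_gt_0_iff)
  define D where "D = diam V E"
  show ?thesis
  proof (cases "D = 0")
    case True
    have "1 + c * a > 0" using a0 assms(5) by (simp add: add_pos_pos)
    then show ?thesis using True cardpos unfolding D_def a_def by simp
  next
    case False
    then have Dpos: "real D > 0" by simp
    have Rpos: "real R > 0" using assms(4,6) Dpos unfolding D_def by simp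
    then have "R \<ge> 1" by simp
    then obtain m where m: "3 ^ m \<le> R" "R < 3 ^ (m + 1)"
      using ex_power_ivl1[of 3 R] by auto
    obtain v0 w g where v0: "v0 \<in> V"
      and W: "\<forall>i::nat<3. w i \<in> V \<and> gdist E v0 (w i) = R \<and> geodesic E (g i) v0 (w i)"
      and C: "\<forall>i::nat<3. \<forall>j::nat<3. i \<noteq> j \<longrightarrow> (\<forall>ki\<le>R. \<forall>kj\<le>R.
         gdist E (g i ki) (g j kj) \<ge> max ki kj)"
      using assms(7) unfolding caret3_def by blast
    define L :: nat where "L = 3 ^ m"
    define T where "T = D div L"
    have cnt: "(T + 1) * 4 ^ m \<le> card V"
      using diam_count[OF G v0 W C m(1)] unfolding T_def L_def D_def .
    have L0: "L > 0" unfolding L_def by simp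
    have e1: "D div L * L + D mod L = D" by (rule div_mult_mod_eq)
    have e2: "D mod L < L" using mod_less_divisor[OF L0, of D] .
    have e3: "(T + 1) * L = T * L + L" by simp
    have "D < (T + 1) * L" using e1 e2 e3 unfolding T_def by linarith
    then have "real D < real (T + 1) * real L" by (metis of_nat_less_iff of_nat_mult)
    then have DL: "real D / real L < real (T + 1)" using L0 by (simp add: divide_less_eq)
    have p3: "(3::real) powr a = 4 / 3" unfolding a_def by (simp add: powr_diff)
    have Rm: "real R powr a < (4/3) ^ (m + 1)"
    proof -
      have "real R < 3 ^ (m + 1)" using m(2) by (metis of_nat_less_iff of_nat_numeral of_nat_power)
      then have "real R powr a < (3 ^ (m + 1)) powr a"
        using powr_less_mono2[OF a0] by simp
      also have "((3::real) ^ (m + 1)) powr a = (3 powr a) ^ (m + 1)"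
      proof -
        have "((3::real) ^ (m + 1)) = 3 powr (real (m + 1))" by (rule powr_realpow[symmetric]) simp
        then have "((3::real) ^ (m + 1)) powr a = 3 powr (real (m + 1) * a)" by (simp only: powr_powr)
        also have "\<dots> = (3 powr a) ^ (m + 1)" by (rule powr_power[symmetric]) simp
        finally show ?thesis .
      qed
      finally show ?thesis using p3 by simp
    qed
    have rhs: "\<epsilon> powr a * real D powr (1 + c * a) = real D * real R powr a"
    proof -
      have "real D powr (1 + c * a) = real D * (real D powr c) powr a"
        by (simp add: powr_add powr_powr)
      then show ?thesis using assms(6) unfolding D_def by (simp add: powr_mult)
    qed
    have "(1/2) * \<epsilon> powr a * real D powr (1 + c * a) = (1/2) * real D * real R powr a"
      using rhs by simp
    also have "\<dots> < (1/2) * real D * (4/3) ^ (m + 1)"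
      using Rm Dpos by simp
    also have "\<dots> \<le> real D * (4/3) ^ m" using Dpos by simp
    also have "\<dots> = real D / real L * 4 ^ m" unfolding L_def by (simp add: power_divide)
    also have "\<dots> < real (T + 1) * 4 ^ m" using DL by (intro mult_strict_right_mono) auto
    also have "\<dots> \<le> real (card V)" using cnt by (metis of_nat_le_iff of_nat_mult of_nat_numeral of_nat_power)
    finally show ?thesis unfolding a_def D_def .
  qed
qed

end
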